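(* Let $X$ be a real Banach space and $f:X\to\mathbb{R}\cup\{+\infty\}$ proper, convex and lsc. Then for every $(w,v^* )\in\mathrm{dom}\, f\times\mathrm{dom}\, f^*$, \[ f(w)+f^*(v^* ) = F_{\partial f}(w,v^* ) + K_{\partial f}(w,v^* ). \]
   Context: $f^*$ is the Fenchel conjugate. For $\varepsilon\ge0$, $\partial_\varepsilon f(x)=\{x^*: f(y)-f(x)\ge\langle y-x,x^*\rangle-\varepsilon\ \forall y\}$, and analogously $\partial_\varepsilon f^*(x^* )=\{y\in X: f^*(z^* )-f^*(x^* )\ge\langle y,z^*-x^*\rangle-\varepsilon\ \forall z^*\}$. Define $\partial_\varepsilon(f^*\oplus f)(x,x^* )=\{(y,y^* )\in X\times X^*: y^*\in\partial_a f(x),\ y\in\partial_b f^*(x^* )\text{ for some } a,b\ge0 \text{ with } a+b\le\varepsilon\}$ and $K_{\partial f}(x,x^* )=\inf\{\varepsilon\ge0: \mathrm{Gr}(\partial f)\cap\partial_\varepsilon(f^*\oplus f)(x,x^* )\neq\varnothing\}$. $F_{\partial f}(x,x^* )=\sup_{(y,y^* )\in\mathrm{Gr}(\partial f)}\{\langle y,x^*\rangle+\langle x,y^*\rangle-\langle y,y^*\rangle\}$. *)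

theory Defs
  imports "HOL-Analysis.Analysis" "HOL-Library.Extended_Real"
begin

text \<open>X is a real Banach space ('a::banach); its topological dual X* is the type
  of bounded linear functionals blinfun from 'a to real; the pairing is blinfun_apply.\<close>

definition proper_fun :: "('a \<Rightarrow> ereal) \<Rightarrow> bool" where
  "proper_fun f \<longleftrightarrow> (\<forall>x. f x \<noteq> -\<infinity>) \<and> (\<exists>x. f x \<noteq> \<infinity>)"

definition convex_fun :: "('a::real_vector \<Rightarrow> ereal) \<Rightarrow> bool" where
  "convex_fun f \<longleftrightarrow> (\<forall>x y t. 0 < t \<and> t < 1 \<longrightarrow>
      f (t *\<^sub>R x + (1 - t) *\<^sub>R y) \<le> ereal t * f x + ereal (1 - t) * f y)"

definition lsc_fun :: "('a::topological_space \<Rightarrow> ereal) \<Rightarrow> bool" where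
  "lsc_fun f \<longleftrightarrow> (\<forall>c::real. closed {x. f x \<le> ereal c})"

definition edom :: "('a \<Rightarrow> ereal) \<Rightarrow> 'a set" where
  "edom f = {x. f x < \<infinity>}"

definition fconj :: "('a::real_normed_vector \<Rightarrow> ereal) \<Rightarrow> ('a \<Rightarrow>\<^sub>L real) \<Rightarrow> ereal" where
  "fconj f xs = (SUP x. ereal (blinfun_apply xs x) - f x)"

definition eps_subdiff :: "('a::real_normed_vector \<Rightarrow> ereal) \<Rightarrow> real \<Rightarrow> 'a \<Rightarrow> ('a \<Rightarrow>\<^sub>L real) set" where
  "eps_subdiff f e x = {xs. f x \<noteq> \<infinity> \<and> f x \<noteq> -\<infinity> \<and>
      (\<forall>y. f y - f x \<ge> ereal (blinfun_apply xs (y - x) - e))}"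

text \<open>epsilon-subdifferential of f* at x*, taken as a subset of X.\<close>
definition eps_subdiff_conj :: "('a::real_normed_vector \<Rightarrow> ereal) \<Rightarrow> real \<Rightarrow> ('a \<Rightarrow>\<^sub>L real) \<Rightarrow> 'a set" where
  "eps_subdiff_conj f e xs = {y. fconj f xs \<noteq> \<infinity> \<and> fconj f xs \<noteq> -\<infinity> \<and>
      (\<forall>zs. fconj f zs - fconj f xs \<ge> ereal (blinfun_apply (zs - xs) y - e))}"

definition subdiff_graph :: "('a::real_normed_vector \<Rightarrow> ereal) \<Rightarrow> ('a \<times> ('a \<Rightarrow>\<^sub>L real)) set" where
  "subdiff_graph f = {(y, ys). ys \<in> eps_subdiff f 0 y}"

definition eps_subdiff_sum :: "('a::real_normed_vector \<Rightarrow> ereal) \<Rightarrow> real \<Rightarrow> 'a \<Rightarrow> ('a \<Rightarrow>\<^sub>L real)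
      \<Rightarrow> ('a \<times> ('a \<Rightarrow>\<^sub>L real)) set" where
  "eps_subdiff_sum f e x xs = {(y, ys). \<exists>a b. a \<ge> 0 \<and> b \<ge> 0 \<and> a + b \<le> e \<and>
      ys \<in> eps_subdiff f a x \<and> y \<in> eps_subdiff_conj f b xs}"

definition K_fun :: "('a::real_normed_vector \<Rightarrow> ereal) \<Rightarrow> 'a \<Rightarrow> ('a \<Rightarrow>\<^sub>L real) \<Rightarrow> ereal" where
  "K_fun f x xs = Inf (ereal ` {e. e \<ge> 0 \<and> subdiff_graph f \<inter> eps_subdiff_sum f e x xs \<noteq> {}})"

definition F_fun :: "('a::real_normed_vector \<Rightarrow> ereal) \<Rightarrow> 'a \<Rightarrow> ('a \<Rightarrow>\<^sub>L real) \<Rightarrow> ereal" where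
  "F_fun f x xs = (SUP p\<in>subdiff_graph f. ereal (blinfun_apply xs (fst p) + blinfun_apply (snd p) x
      - blinfun_apply (snd p) (fst p)))"

end

theory Submission
  imports Defs
begin

definition sublin :: "('a::real_vector \<Rightarrow> real) \<Rightarrow> bool" where
  "sublin p \<longleftrightarrow> (\<forall>x y. p (x + y) \<le> p x + p y) \<and> (\<forall>c x. c > 0 \<longrightarrow> p (c *\<^sub>R x) = c * p x)"

lemma homog_from_le:
  fixes p :: "'a::real_vector \<Rightarrow> real"
  assumes le: "\<And>c h. c > 0 \<Longrightarrow> p (c *\<^sub>R h) \<le> c * p h" and c: "c > 0"
  shows "p (c *\<^sub>R h) = c * p h"
proof -
  have "p h = p ((1/c) *\<^sub>R (c *\<^sub>R h))" using c by simp
  also have "\<dots> \<le> (1/c) * p (c *\<^sub>R h)" using le[of "1/c" "c *\<^sub>R h"] c by simp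
  finally have "c * p h \<le> p (c *\<^sub>R h)" using c by (simp add: field_simps)
  with le[OF c, of h] show ?thesis by linarith
qed

lemma sublin_zero: "sublin p \<Longrightarrow> p 0 = 0"
proof -
  assume "sublin p"
  then have H: "\<forall>c x. c > 0 \<longrightarrow> p (c *\<^sub>R x) = c * p x" unfolding sublin_def by blast
  have "p 0 = 2 * p 0" using H[rule_format, of "2::real" 0] by simp
  then show ?thesis by linarith
qed

lemma sublin_neg: "sublin p \<Longrightarrow> - p (- x) \<le> p x"
proof -
  assume s: "sublin p"
  have "p (x + - x) \<le> p x + p (- x)" using s unfolding sublin_def by blast
  then show ?thesis using sublin_zero[OF s] by simp
qed

lemma sublinear_minorant:
  fixes q :: "'a::real_vector \<Rightarrow> real"
  assumes q: "sublin q"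
  shows "\<exists>L. (\<forall>x y. L (x + y) = L x + L y) \<and> (\<forall>c x. L (c *\<^sub>R x) = c * L x) \<and> (\<forall>x. L x \<le> q x)"
proof -
  define P where "P = {p. sublin p \<and> (\<forall>x. p x \<le> q x)}"
  define r where "r = {(p1, p2). p1 \<in> P \<and> p2 \<in> P \<and> (\<forall>x. p2 x \<le> p1 x)}"
  have qP: "q \<in> P" using q unfolding P_def by auto
  have Field: "Field r = P"
    unfolding Field_def r_def Domain_def Range_def by auto
  have po: "Partial_order r"
    unfolding Field partial_order_on_def preorder_on_def refl_on_def trans_def antisym_def
    unfolding r_def by (auto intro: order_antisym ext) (meson order_trans)+
  have lowb: "- q (- x) \<le> p x" if "p \<in> P" for p x
  proof -
    have "sublin p" "p (- x) \<le> q (- x)" using that unfolding P_def by auto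
    then show ?thesis using sublin_neg[of p x] by linarith
  qed
  have chain: "\<exists>u\<in>Field r. \<forall>a\<in>C. (a, u) \<in> r" if C: "C \<in> Chains r" for C
  proof (cases "C = {}")
    case True then show ?thesis using qP Field by auto
  next
    case False
    have CP: "C \<subseteq> P" using C unfolding Chains_def r_def by blast
    define pc where "pc x = Inf ((\<lambda>p. p x) ` C)" for x
    have bdd: "bdd_below ((\<lambda>p. p x) ` C)" for x
      using lowb CP by (auto intro!: bdd_belowI[where m="- q (- x)"])
    have pc_le: "pc x \<le> p x" if "p \<in> C" for p x
      unfolding pc_def using bdd that by (auto intro: cInf_lower)
    have pc_ge: "m \<le> pc x" if "\<And>p. p \<in> C \<Longrightarrow> m \<le> p x" for m x
      unfolding pc_def using False that by (auto intro: cInf_greatest)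
    have hom: "pc (c *\<^sub>R h) = c * pc h" if "c > 0" for c h
    proof (rule homog_from_le[OF _ that])
      fix c :: real and h assume c: "c > 0"
      have "pc (c *\<^sub>R h) / c \<le> pc h"
      proof (rule pc_ge)
        fix p assume p: "p \<in> C"
        have "pc (c *\<^sub>R h) \<le> p (c *\<^sub>R h)" by (rule pc_le[OF p])
        also have "\<dots> = c * p h" using CP p c unfolding P_def sublin_def by blast
        finally show "pc (c *\<^sub>R h) / c \<le> p h" using c by (simp add: field_simps)
      qed
      then show "pc (c *\<^sub>R h) \<le> c * pc h" using c by (simp add: field_simps)
    qed
    have sub: "pc (x + y) \<le> pc x + pc y" for x y
    proof -
      have "pc (x + y) - pc y \<le> pc x"
      proof (rule pc_ge)
        fix p1 assume p1: "p1 \<in> C"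
        have "pc (x + y) - p1 x \<le> pc y"
        proof (rule pc_ge)
          fix p2 assume p2: "p2 \<in> C"
          have "(p1, p2) \<in> r \<or> (p2, p1) \<in> r" using C p1 p2 unfolding Chains_def by blast
          then obtain pk where pk: "pk \<in> C" "\<forall>x. pk x \<le> p1 x" "\<forall>x. pk x \<le> p2 x"
            unfolding r_def using p1 p2 by auto
          have "pc (x + y) \<le> pk (x + y)" by (rule pc_le[OF pk(1)])
          also have "\<dots> \<le> pk x + pk y" using CP pk(1) unfolding P_def sublin_def by blast
          also have "\<dots> \<le> p1 x + p2 y" using pk by (simp add: add_mono)
          finally show "pc (x + y) - p1 x \<le> p2 y" by simp
        qed
        then show "pc (x + y) - pc y \<le> p1 x" by simp
      qed
      then show ?thesis by simp
    qed
    obtain p0 where p0: "p0 \<in> C" using False by blast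
    have "\<forall>x. p0 x \<le> q x" using CP p0 unfolding P_def by auto
    then have "pc x \<le> q x" for x using pc_le[OF p0, of x]
      by (metis (no_types) order_trans)
    then have pcP: "pc \<in> P" unfolding P_def sublin_def
      using hom sub by auto
    have "\<forall>a\<in>C. (a, pc) \<in> r" unfolding r_def using pcP pc_le CP by auto
    then show ?thesis using pcP Field by auto
  qed
  obtain m where mP: "m \<in> P" and mmin: "\<And>a. a \<in> P \<Longrightarrow> (m, a) \<in> r \<Longrightarrow> a = m"
    using Zorns_po_lemma[OF po chain] unfolding Field by blast
  have ms: "sublin m" and mq: "\<And>x. m x \<le> q x" using mP unfolding P_def by auto
  have m0: "m 0 = 0" by (rule sublin_zero[OF ms])
  have mhom: "m (c *\<^sub>R x) = c * m x" if "c \<ge> 0" for c x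
    using that ms m0 unfolding sublin_def by (cases "c = 0") auto
  have madd: "m (x + y) \<le> m x + m y" for x y using ms unfolding sublin_def by blast
  have super: "m h + m x0 \<le> m (h + x0)" for h x0
  proof -
    define p' where "p' h = Inf ((\<lambda>t. m (h + t *\<^sub>R x0) - t * m x0) ` {0..})" for h
    have bdd: "bdd_below ((\<lambda>t. m (h + t *\<^sub>R x0) - t * m x0) ` {0..})" for h
    proof (rule bdd_belowI[where m="- m (- h)"], clarsimp)
      fix t :: real assume t: "0 \<le> t"
      have "m (t *\<^sub>R x0) \<le> m (h + t *\<^sub>R x0) + m (- h)"
        using madd[of "h + t *\<^sub>R x0" "- h"] by simp
      then show "- m (- h) \<le> m (h + t *\<^sub>R x0) - t * m x0" using mhom[OF t] by simp
    qed
    have p'_le: "p' h \<le> m (h + t *\<^sub>R x0) - t * m x0" if "t \<ge> 0" for h t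
      unfolding p'_def using bdd that by (auto intro: cInf_lower)
    have p'_ge: "a \<le> p' h" if "\<And>t. t \<ge> 0 \<Longrightarrow> a \<le> m (h + t *\<^sub>R x0) - t * m x0" for a h
      unfolding p'_def using that by (auto intro: cInf_greatest)
    have p'm: "p' h \<le> m h" for h using p'_le[of 0 h] by simp
    have hom: "p' (c *\<^sub>R h) = c * p' h" if "c > 0" for c h
    proof (rule homog_from_le[OF _ that])
      fix c :: real and h assume c: "c > 0"
      have "p' (c *\<^sub>R h) / c \<le> p' h"
      proof (rule p'_ge)
        fix t :: real assume t: "t \<ge> 0"
        have "p' (c *\<^sub>R h) \<le> m (c *\<^sub>R h + (c * t) *\<^sub>R x0) - (c * t) * m x0"
          using p'_le c t by simp
        also have "c *\<^sub>R h + (c * t) *\<^sub>R x0 = c *\<^sub>R (h + t *\<^sub>R x0)" by (simp add: scaleR_add_right)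
        also have "m \<dots> = c * m (h + t *\<^sub>R x0)" using mhom c by simp
        finally show "p' (c *\<^sub>R h) / c \<le> m (h + t *\<^sub>R x0) - t * m x0"
          using c by (simp add: field_simps)
      qed
      then show "p' (c *\<^sub>R h) \<le> c * p' h" using c by (simp add: field_simps)
    qed
    have sub: "p' (x + y) \<le> p' x + p' y" for x y
    proof -
      have "p' (x + y) - p' y \<le> p' x"
      proof (rule p'_ge)
        fix t1 :: real assume t1: "t1 \<ge> 0"
        have "p' (x + y) - (m (x + t1 *\<^sub>R x0) - t1 * m x0) \<le> p' y"
        proof (rule p'_ge)
          fix t2 :: real assume t2: "t2 \<ge> 0"
          have "p' (x + y) \<le> m ((x + y) + (t1 + t2) *\<^sub>R x0) - (t1 + t2) * m x0"
            using p'_le t1 t2 by simp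
          also have "(x + y) + (t1 + t2) *\<^sub>R x0 = (x + t1 *\<^sub>R x0) + (y + t2 *\<^sub>R x0)"
            by (simp add: algebra_simps)
          finally show "p' (x + y) - (m (x + t1 *\<^sub>R x0) - t1 * m x0) \<le> m (y + t2 *\<^sub>R x0) - t2 * m x0"
            using madd[of "x + t1 *\<^sub>R x0" "y + t2 *\<^sub>R x0"] by (simp add: algebra_simps)
        qed
        then show "p' (x + y) - p' y \<le> m (x + t1 *\<^sub>R x0) - t1 * m x0" by simp
      qed
      then show ?thesis by simp
    qed
    have "p' x \<le> q x" for x using p'm[of x] mq[of x] by linarith
    then have "p' \<in> P" unfolding P_def sublin_def using hom sub by auto
    moreover have "(m, p') \<in> r" unfolding r_def using mP \<open>p' \<in> P\<close> p'm by auto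
    ultimately have "p' = m" using mmin by blast
    then have "m h \<le> m (h + 1 *\<^sub>R x0) - 1 * m x0" using p'_le[of 1 h] by simp
    then show ?thesis by simp
  qed
  have add: "m (x + y) = m x + m y" for x y using super[of x y] madd[of x y] by simp
  have neg: "m (- x) = - m x" for x using add[of x "- x"] m0 by simp
  have hom: "m (c *\<^sub>R x) = c * m x" for c x
  proof (cases "c \<ge> 0")
    case True then show ?thesis by (rule mhom)
  next
    case False
    then have "m (c *\<^sub>R x) = m ((- c) *\<^sub>R (- x))" by simp
    also have "\<dots> = (- c) * m (- x)" using False by (intro mhom) simp
    finally show ?thesis using neg by simp
  qed
  show ?thesis using add hom mq by blast
qed

lemma ekeland:
  fixes g :: "'a::banach \<Rightarrow> real" and D :: "'a set"
  assumes bdd: "\<And>z. z \<in> D \<Longrightarrow> m \<le> g z"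
    and closedS: "\<And>x (zs::nat\<Rightarrow>'a) z. x \<in> D \<Longrightarrow>
        (\<And>n. zs n \<in> D \<and> g (zs n) + norm (zs n - x) \<le> g x) \<Longrightarrow> zs \<longlonglongrightarrow> z \<Longrightarrow>
        z \<in> D \<and> g z + norm (z - x) \<le> g x"
    and x0: "x0 \<in> D"
  shows "\<exists>y\<in>D. \<forall>z\<in>D. g y \<le> g z + norm (z - y)"
proof -
  define S where "S x = {z \<in> D. g z + norm (z - x) \<le> g x}" for x
  have trans: "z \<in> S x" if "z \<in> S x'" "x' \<in> S x" for z x x'
  proof -
    have "norm (z - x) \<le> norm (z - x') + norm (x' - x)"
      using norm_triangle_ineq[of "z - x'" "x' - x"] by simp
    then show ?thesis using that unfolding S_def by auto
  qed
  have refl: "x \<in> S x" if "x \<in> D" for x using that unfolding S_def by auto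
  have bddS: "bdd_below (g ` S x)" for x
    using bdd unfolding S_def by (auto intro: bdd_belowI[where m=m])
  define step where "step x n = (SOME z. z \<in> S x \<and> g z < Inf (g ` S x) + (1/2)^n)" for x and n :: nat
  have step_ok: "step x n \<in> S x \<and> g (step x n) < Inf (g ` S x) + (1/2)^n" if xD: "x \<in> D" for x n
  proof -
    have "Inf (g ` S x) < Inf (g ` S x) + (1/2)^n" by simp
    then obtain z where "z \<in> S x" "g z < Inf (g ` S x) + (1/2)^n"
      using cInf_lessD[of "g ` S x"] refl[OF xD] by blast
    then have "\<exists>z. z \<in> S x \<and> g z < Inf (g ` S x) + (1/2)^n" by blast
    then show ?thesis unfolding step_def by (rule someI_ex)
  qed
  define xs where "xs = rec_nat x0 (\<lambda>n x. step x n)"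
  have xs0: "xs 0 = x0" and xsS: "xs (Suc n) = step (xs n) n" for n
    by (simp_all add: xs_def)
  have SD: "S x \<subseteq> D" for x unfolding S_def by auto
  have inD: "xs n \<in> D" for n
  proof (induction n)
    case 0 then show ?case using x0 xs0 by simp
  next
    case (Suc n) then show ?case using step_ok[OF Suc] SD xsS by auto
  qed
  have xs_next: "xs (Suc n) \<in> S (xs n)" for n using step_ok[OF inD[of n]] xsS by simp
  have mono: "S (xs m) \<subseteq> S (xs n)" if "n \<le> m" for m n
    using that
  proof (induction m rule: dec_induct)
    case base then show ?case by simp
  next
    case (step k) then show ?case using trans[OF _ xs_next[of k]] by blast
  qed
  have xs_in: "xs m \<in> S (xs n)" if "n \<le> m" for m n
    using mono[OF that] refl[OF inD[of m]] by blast
  have small: "norm (z - xs (Suc n)) \<le> (1/2)^n" if "z \<in> S (xs (Suc n))" for z n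
  proof -
    have "z \<in> S (xs n)" using trans[OF that xs_next] .
    then have "Inf (g ` S (xs n)) \<le> g z" using bddS by (auto intro: cInf_lower)
    moreover have "g z + norm (z - xs (Suc n)) \<le> g (xs (Suc n))" using that unfolding S_def by auto
    moreover have "g (xs (Suc n)) < Inf (g ` S (xs n)) + (1/2)^n"
      using step_ok[OF inD[of n]] xsS by simp
    ultimately show ?thesis by linarith
  qed
  have "Cauchy xs"
  proof (rule CauchyI)
    fix e :: real assume e: "0 < e"
    obtain N where N: "(1/2::real)^N < e/2" using real_arch_pow_inv[of "e/2" "1/2::real"] e by auto
    show "\<exists>M. \<forall>m\<ge>M. \<forall>n\<ge>M. norm (xs m - xs n) < e"
    proof (intro exI[of _ "Suc N"] allI impI)
      fix m n assume m: "Suc N \<le> m" and n: "Suc N \<le> n"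
      have a: "norm (xs m - xs (Suc N)) \<le> (1/2)^N" using small xs_in[OF m] by blast
      have b: "norm (xs n - xs (Suc N)) \<le> (1/2)^N" using small xs_in[OF n] by blast
      have "norm (xs m - xs n) \<le> norm (xs m - xs (Suc N)) + norm (xs n - xs (Suc N))"
        using norm_triangle_ineq4[of "xs m - xs (Suc N)" "xs n - xs (Suc N)"] by simp
      then show "norm (xs m - xs n) < e" using a b N by linarith
    qed
  qed
  then obtain y where y: "xs \<longlonglongrightarrow> y" using Cauchy_convergent convergent_def by blast
  have yS: "y \<in> S (xs n)" for n
  proof -
    have "(\<lambda>k. xs (k + n)) \<longlonglongrightarrow> y" using LIMSEQ_ignore_initial_segment[OF y] .
    moreover have "xs (k + n) \<in> D \<and> g (xs (k + n)) + norm (xs (k + n) - xs n) \<le> g (xs n)" for k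
      using xs_in[of n "k + n"] unfolding S_def by auto
    ultimately have "y \<in> D \<and> g y + norm (y - xs n) \<le> g (xs n)"
      using closedS[OF inD[of n], of "\<lambda>k. xs (k + n)" y] by blast
    then show ?thesis unfolding S_def by blast
  qed
  have yD: "y \<in> D" using yS[of 0] SD by blast
  have "g y \<le> g z + norm (z - y)" if z: "z \<in> D" for z
  proof (rule ccontr)
    assume neg: "\<not> g y \<le> g z + norm (z - y)"
    then have zy: "z \<in> S y" using z unfolding S_def by auto
    have "z \<in> S (xs (Suc n))" for n using trans[OF zy yS] .
    then have "norm (xs (Suc n) - z) \<le> (1/2)^n" for n using small by (metis norm_minus_commute)
    then have "(\<lambda>n. xs (Suc n) - z) \<longlonglongrightarrow> 0"
      by (intro Lim_null_comparison[OF _ LIMSEQ_power_zero[of "1/2::real"]]) auto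
    then have "(\<lambda>n. xs (Suc n)) \<longlonglongrightarrow> z" using Lim_null by blast
    moreover have "(\<lambda>n. xs (Suc n)) \<longlonglongrightarrow> y" using LIMSEQ_Suc[OF y] .
    ultimately have "z = y" using LIMSEQ_unique by blast
    then show False using neg by simp
  qed
  then show ?thesis using yD by blast
qed

lemma subgrad_exists:
  fixes g :: "'a::real_normed_vector \<Rightarrow> real"
  assumes yD: "y \<in> D" and ek: "\<And>z. z \<in> D \<Longrightarrow> g y \<le> g z + norm (z - y)"
    and cvx: "\<And>z1 z2 t. z1 \<in> D \<Longrightarrow> z2 \<in> D \<Longrightarrow> 0 < t \<Longrightarrow> t < 1 \<Longrightarrow>
      t *\<^sub>R z1 + (1 - t) *\<^sub>R z2 \<in> D \<and> g (t *\<^sub>R z1 + (1 - t) *\<^sub>R z2) \<le> t * g z1 + (1 - t) * g z2"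
  shows "\<exists>L. bounded_linear L \<and> (\<forall>z\<in>D. L (z - y) \<le> g z - g y)"
proof -
  define tm where "tm h t u = (g (y + t *\<^sub>R u) - g y) / t + norm (h - u)" for h and t :: real and u
  define T where "T h = {tm h t u | t u. t > 0 \<and> y + t *\<^sub>R u \<in> D}" for h
  define q where "q h = Inf (T h)" for h
  have lowb: "- norm h \<le> tm h t u" if t: "t > 0" and D: "y + t *\<^sub>R u \<in> D" for h t u
  proof -
    have "g y \<le> g (y + t *\<^sub>R u) + t * norm u" using ek[OF D] t by simp
    then have "- norm u \<le> (g (y + t *\<^sub>R u) - g y) / t" using t by (simp add: field_simps)
    moreover have "norm u \<le> norm h + norm (h - u)"
      using norm_triangle_ineq4[of h "h - u"] by simp
    ultimately show ?thesis unfolding tm_def by linarith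
  qed
  have ne: "T h \<noteq> {}" for h
  proof -
    have "tm h 1 0 \<in> T h" unfolding T_def using yD by force
    then show ?thesis by blast
  qed
  have bdd: "bdd_below (T h)" for h
    unfolding T_def using lowb by (auto intro!: bdd_belowI[where m="- norm h"])
  have q_le: "q h \<le> tm h t u" if "t > 0" "y + t *\<^sub>R u \<in> D" for h t u
    unfolding q_def using that bdd by (auto intro!: cInf_lower simp: T_def)
  have q_ge: "a \<le> q h" if "\<And>t u. t > 0 \<Longrightarrow> y + t *\<^sub>R u \<in> D \<Longrightarrow> a \<le> tm h t u" for a h
    unfolding q_def by (rule cInf_greatest[OF ne]) (auto simp: T_def intro: that)
  have q_norm: "q h \<le> norm h" for h using q_le[of 1 0 h] yD unfolding tm_def by simp
  have hom: "q (c *\<^sub>R h) = c * q h" if "c > 0" for c h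
  proof (rule homog_from_le[OF _ that])
    fix c :: real and h assume c: "c > 0"
    have "q (c *\<^sub>R h) / c \<le> q h"
    proof (rule q_ge)
      fix t u assume t: "t > 0" and D: "y + t *\<^sub>R u \<in> D"
      have D': "y + (t / c) *\<^sub>R (c *\<^sub>R u) \<in> D" using D c by simp
      have "q (c *\<^sub>R h) \<le> tm (c *\<^sub>R h) (t / c) (c *\<^sub>R u)" using q_le[OF _ D'] t c by simp
      also have "\<dots> = c * tm h t u"
      proof -
        have "norm (c *\<^sub>R h - c *\<^sub>R u) = c * norm (h - u)"
          using c by (metis abs_of_pos norm_scaleR scaleR_diff_right)
        then show ?thesis unfolding tm_def using c t by (simp add: field_simps)
      qed
      finally show "q (c *\<^sub>R h) / c \<le> tm h t u" using c by (simp add: field_simps)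
    qed
    then show "q (c *\<^sub>R h) \<le> c * q h" using c by (simp add: field_simps)
  qed
  have sub: "q (h1 + h2) \<le> q h1 + q h2" for h1 h2
  proof -
    have "q (h1 + h2) - q h2 \<le> q h1"
    proof (rule q_ge)
      fix t1 u1 assume t1: "t1 > 0" and D1: "y + t1 *\<^sub>R u1 \<in> D"
      have "q (h1 + h2) - tm h1 t1 u1 \<le> q h2"
      proof (rule q_ge)
        fix t2 u2 assume t2: "t2 > 0" and D2: "y + t2 *\<^sub>R u2 \<in> D"
        define t where "t = t1 * t2 / (t1 + t2)"
        define \<alpha> where "\<alpha> = t2 / (t1 + t2)"
        have tpos: "t > 0" unfolding t_def using t1 t2 by simp
        have a0: "0 < \<alpha>" and a1: "\<alpha> < 1" unfolding \<alpha>_def using t1 t2 by auto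
        have at1: "\<alpha> * t1 = t" and at2: "(1 - \<alpha>) * t2 = t"
          unfolding \<alpha>_def t_def using t1 t2 by (auto simp: field_simps)
        have eq: "\<alpha> *\<^sub>R (y + t1 *\<^sub>R u1) + (1 - \<alpha>) *\<^sub>R (y + t2 *\<^sub>R u2) = y + t *\<^sub>R (u1 + u2)"
        proof -
          have "\<alpha> *\<^sub>R (y + t1 *\<^sub>R u1) + (1 - \<alpha>) *\<^sub>R (y + t2 *\<^sub>R u2)
              = y + (\<alpha> * t1) *\<^sub>R u1 + ((1 - \<alpha>) * t2) *\<^sub>R u2"
            by (simp add: algebra_simps)
          then show ?thesis using at1 at2 by (simp add: scaleR_add_right)
        qed
        from cvx[OF D1 D2 a0 a1] eq
        have D3: "y + t *\<^sub>R (u1 + u2) \<in> D"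
          and gle: "g (y + t *\<^sub>R (u1 + u2)) \<le> \<alpha> * g (y + t1 *\<^sub>R u1) + (1 - \<alpha>) * g (y + t2 *\<^sub>R u2)"
          by auto
        have "(g (y + t *\<^sub>R (u1 + u2)) - g y) / t
            \<le> (\<alpha> * (g (y + t1 *\<^sub>R u1) - g y) + (1 - \<alpha>) * (g (y + t2 *\<^sub>R u2) - g y)) / t"
          using gle tpos by (intro divide_right_mono) (auto simp: algebra_simps)
        also have "\<dots> = (g (y + t1 *\<^sub>R u1) - g y) / t1 + (g (y + t2 *\<^sub>R u2) - g y) / t2"
        proof -
          have e1: "\<alpha> / t = 1 / t1" and e2: "(1 - \<alpha>) / t = 1 / t2" using at1 at2 t1 t2 tpos
            by (auto simp: field_simps)
          define A where "A = g (y + t1 *\<^sub>R u1) - g y"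
          define B where "B = g (y + t2 *\<^sub>R u2) - g y"
          have "(\<alpha> * A + (1 - \<alpha>) * B) / t = (\<alpha> / t) * A + ((1 - \<alpha>) / t) * B"
            by (simp add: add_divide_distrib)
          also have "\<dots> = A / t1 + B / t2" unfolding e1 e2 by simp
          finally show ?thesis unfolding A_def B_def .
        qed
        finally have A: "(g (y + t *\<^sub>R (u1 + u2)) - g y) / t
            \<le> (g (y + t1 *\<^sub>R u1) - g y) / t1 + (g (y + t2 *\<^sub>R u2) - g y) / t2" .
        have B: "norm (h1 + h2 - (u1 + u2)) \<le> norm (h1 - u1) + norm (h2 - u2)"
          using norm_triangle_ineq[of "h1 - u1" "h2 - u2"] by (simp add: algebra_simps)
        have "q (h1 + h2) \<le> tm (h1 + h2) t (u1 + u2)" by (rule q_le[OF tpos D3])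
        also have "\<dots> \<le> tm h1 t1 u1 + tm h2 t2 u2" unfolding tm_def using A B by linarith
        finally show "q (h1 + h2) - tm h1 t1 u1 \<le> tm h2 t2 u2" by simp
      qed
      then show "q (h1 + h2) - q h2 \<le> tm h1 t1 u1" by simp
    qed
    then show ?thesis by simp
  qed
  have "sublin q" unfolding sublin_def using hom sub by auto
  then obtain L where Ladd: "\<And>x y. L (x + y) = L x + L y" and Lhom: "\<And>c x. L (c *\<^sub>R x) = c * L x"
    and Lq: "\<And>x. L x \<le> q x"
    using sublinear_minorant by blast
  have Lneg: "L (- x) = - L x" for x using Lhom[of "-1" x] by simp
  have "bounded_linear L"
  proof (rule bounded_linear_intro[where K=1])
    show "L (x + y) = L x + L y" for x y by (rule Ladd)
    show "L (r *\<^sub>R x) = r *\<^sub>R L x" for r x using Lhom by simp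
    show "norm (L x) \<le> norm x * 1" for x
      using Lq[of x] q_norm[of x] Lq[of "- x"] q_norm[of "- x"] Lneg[of x] by auto
  qed
  moreover have "L (z - y) \<le> g z - g y" if "z \<in> D" for z
  proof -
    have "q (z - y) \<le> tm (z - y) 1 (z - y)" using q_le[of 1 "z - y"] that by simp
    then show ?thesis using Lq[of "z - y"] unfolding tm_def by simp
  qed
  ultimately show ?thesis by blast
qed

lemma lsc_seq:
  fixes f :: "'a::metric_space \<Rightarrow> ereal"
  assumes lsc: "lsc_fun f" and le: "\<And>n. f (zs n) \<le> ereal (r n)"
    and zs: "zs \<longlonglongrightarrow> z" and r: "r \<longlonglongrightarrow> \<rho>"
  shows "f z \<le> ereal \<rho>"
proof (rule ereal_le_epsilon2)
  fix e :: real assume e: "0 < e"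
  have ev: "eventually (\<lambda>n. r n < \<rho> + e) sequentially"
    using order_tendstoD(2)[OF r, of "\<rho> + e"] e by simp
  have "eventually (\<lambda>n. zs n \<in> {x. f x \<le> ereal (\<rho> + e)}) sequentially"
    using ev
  proof eventually_elim
    case (elim n)
    have "f (zs n) \<le> ereal (r n)" by (rule le)
    also have "\<dots> \<le> ereal (\<rho> + e)" using elim by simp
    finally show ?case by simp
  qed
  moreover have "closed {x. f x \<le> ereal (\<rho> + e)}" using lsc unfolding lsc_fun_def by blast
  ultimately have "z \<in> {x. f x \<le> ereal (\<rho> + e)}"
    using Lim_in_closed_set[OF _ _ sequentially_bot zs] by blast
  then show "f z \<le> ereal \<rho> + ereal e" by simp
qed

lemma fconj_ge: "ereal (blinfun_apply xs x) - f x \<le> fconj f xs"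
  unfolding fconj_def by (rule SUP_upper) simp

lemma le_minus_ereal: "(ereal r \<le> a - ereal b) = (ereal (b + r) \<le> a)"
  by (cases a) auto

lemma fin_char:
  fixes a :: ereal
  shows "(a \<noteq> \<infinity> \<and> a \<noteq> -\<infinity> \<and> (\<forall>z. ereal (r z) \<le> b z - a)) \<longleftrightarrow>
    (\<exists>ar. a = ereal ar \<and> (\<forall>z. ereal (ar + r z) \<le> b z))"
  by (cases a) (auto simp: le_minus_ereal)

lemma eps_subdiff_char:
  "ys \<in> eps_subdiff f e x \<longleftrightarrow>
    (\<exists>fx. f x = ereal fx \<and> (\<forall>z. ereal (fx + (blinfun_apply ys (z - x) - e)) \<le> f z))"
  unfolding eps_subdiff_def using fin_char[of "f x" "\<lambda>z. blinfun_apply ys (z - x) - e" f]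
  by simp

lemma eps_subdiff_conj_char:
  "y \<in> eps_subdiff_conj f e xs \<longleftrightarrow>
    (\<exists>cx. fconj f xs = ereal cx \<and> (\<forall>zs. ereal (cx + (blinfun_apply (zs - xs) y - e)) \<le> fconj f zs))"
  unfolding eps_subdiff_conj_def using fin_char[of "fconj f xs" "\<lambda>zs. blinfun_apply (zs - xs) y - e" "fconj f"]
  by simp

lemma graph_char:
  "(y, ys) \<in> subdiff_graph f \<longleftrightarrow>
    (\<exists>fy. f y = ereal fy \<and> (\<forall>z. ereal (fy + blinfun_apply ys (z - y)) \<le> f z))"
  unfolding subdiff_graph_def using eps_subdiff_char[of ys f 0 y] by simp

lemma graph_nonempty:
  fixes f :: "'a::banach \<Rightarrow> ereal"
  assumes proper: "proper_fun f" and cvxf: "convex_fun f" and lsc: "lsc_fun f"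
    and c: "fconj f vs = ereal c"
  shows "\<exists>y ys. (y, ys) \<in> subdiff_graph f"
proof -
  define D where "D = {z. f z \<noteq> \<infinity>}"
  define fr where "fr z = real_of_ereal (f z)" for z
  define g where "g z = fr z - blinfun_apply vs z" for z
  have fD: "f z = ereal (fr z)" if "z \<in> D" for z
    using that proper unfolding D_def fr_def proper_fun_def by (cases "f z") auto
  have bdd: "- c \<le> g z" if "z \<in> D" for z
  proof -
    have "ereal (blinfun_apply vs z) - ereal (fr z) \<le> ereal c"
      using fconj_ge[of vs z f] fD[OF that] c by simp
    then show ?thesis unfolding g_def by simp
  qed
  have closedS: "z \<in> D \<and> g z + norm (z - x) \<le> g x"
    if x: "x \<in> D" and zsD: "\<And>n. zs n \<in> D \<and> g (zs n) + norm (zs n - x) \<le> g x"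
      and zs: "zs \<longlonglongrightarrow> z" for x and zs :: "nat \<Rightarrow> 'a" and z
  proof -
    have le: "f (zs n) \<le> ereal (g x + blinfun_apply vs (zs n) - norm (zs n - x))" for n
      using zsD[of n] fD[of "zs n"] unfolding g_def by simp
    have "(\<lambda>n. g x + blinfun_apply vs (zs n) - norm (zs n - x)) \<longlonglongrightarrow> g x + blinfun_apply vs z - norm (z - x)"
      using zs by (intro tendsto_intros)
    from lsc_seq[OF lsc le zs this]
    have fz: "f z \<le> ereal (g x + blinfun_apply vs z - norm (z - x))" .
    then have zD: "z \<in> D" unfolding D_def by auto
    then show ?thesis using fz fD[OF zD] unfolding g_def by simp
  qed
  obtain x0 where "f x0 \<noteq> \<infinity>" using proper unfolding proper_fun_def by blast
  then have x0: "x0 \<in> D" unfolding D_def by simp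
  have ex: "\<exists>y\<in>D. \<forall>z\<in>D. g y \<le> g z + norm (z - y)"
    by (rule ekeland[where m="- c", OF bdd closedS x0])
  then obtain y where yD: "y \<in> D" and ek: "\<And>z. z \<in> D \<Longrightarrow> g y \<le> g z + norm (z - y)"
    by blast
  have cvx: "t *\<^sub>R z1 + (1 - t) *\<^sub>R z2 \<in> D \<and> g (t *\<^sub>R z1 + (1 - t) *\<^sub>R z2) \<le> t * g z1 + (1 - t) * g z2"
    if z1: "z1 \<in> D" and z2: "z2 \<in> D" and t0: "0 < t" and t1: "t < 1" for z1 z2 t
  proof -
    have "f (t *\<^sub>R z1 + (1 - t) *\<^sub>R z2) \<le> ereal t * f z1 + ereal (1 - t) * f z2"
      using cvxf t0 t1 unfolding convex_fun_def by blast
    also have "\<dots> = ereal (t * fr z1 + (1 - t) * fr z2)" using fD[OF z1] fD[OF z2] by simp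
    finally have le: "f (t *\<^sub>R z1 + (1 - t) *\<^sub>R z2) \<le> ereal (t * fr z1 + (1 - t) * fr z2)" .
    then have inD: "t *\<^sub>R z1 + (1 - t) *\<^sub>R z2 \<in> D" unfolding D_def by auto
    have lin: "blinfun_apply vs (t *\<^sub>R z1 + (1 - t) *\<^sub>R z2) = t * blinfun_apply vs z1 + (1 - t) * blinfun_apply vs z2"
      by (simp add: blinfun.add_right blinfun.scaleR_right)
    have "fr (t *\<^sub>R z1 + (1 - t) *\<^sub>R z2) \<le> t * fr z1 + (1 - t) * fr z2" using le fD[OF inD] by simp
    then show ?thesis using inD lin unfolding g_def by (simp add: algebra_simps)
  qed
  obtain L where L: "bounded_linear L" and Lle: "\<And>z. z \<in> D \<Longrightarrow> L (z - y) \<le> g z - g y"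
    using subgrad_exists[of y D g, OF yD ek cvx] by blast
  define ys where "ys = Blinfun L + vs"
  have ys_apply: "blinfun_apply ys x = L x + blinfun_apply vs x" for x
    unfolding ys_def using bounded_linear_Blinfun_apply[OF L] by (simp add: plus_blinfun.rep_eq)
  have "(y, ys) \<in> subdiff_graph f"
    unfolding graph_char
  proof (intro exI[of _ "fr y"] conjI allI)
    show "f y = ereal (fr y)" by (rule fD[OF yD])
    fix z
    show "ereal (fr y + blinfun_apply ys (z - y)) \<le> f z"
    proof (cases "z \<in> D")
      case True
      have "L (z - y) \<le> g z - g y" by (rule Lle[OF True])
      then have "fr y + blinfun_apply ys (z - y) \<le> fr z"
        unfolding ys_apply g_def by (simp add: blinfun.diff_right)
      then show ?thesis using fD[OF True] by simp
    next
      case False then show ?thesis unfolding D_def by simp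
    qed
  qed
  then show ?thesis by blast
qed

theorem lemma4p9:
  fixes f :: "'a::banach \<Rightarrow> ereal"
  assumes "proper_fun f" and "convex_fun f" and "lsc_fun f"
    and "w \<in> edom f" and "vs \<in> edom (fconj f)"
  shows "f w + fconj f vs = F_fun f w vs + K_fun f w vs"
proof -
  note proper = assms(1)
  obtain fw where fw: "f w = ereal fw"
    using assms(4) proper unfolding edom_def proper_fun_def by (cases "f w") auto
  obtain x0 where "f x0 \<noteq> \<infinity>" using proper unfolding proper_fun_def by blast
  then obtain a0 where a0: "f x0 = ereal a0" using proper unfolding proper_fun_def by (cases "f x0") auto
  have "ereal (blinfun_apply vs x0 - a0) \<le> fconj f vs" using fconj_ge[of vs x0 f] a0 by simp
  then obtain c where c: "fconj f vs = ereal c"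
    using assms(5) unfolding edom_def by (cases "fconj f vs") auto
  obtain y0 ys0 where p0: "(y0, ys0) \<in> subdiff_graph f"
    using graph_nonempty[OF assms(1-3) c] by blast
  define \<phi> where "\<phi> p = blinfun_apply vs (fst p) + blinfun_apply (snd p) w - blinfun_apply (snd p) (fst p)" for p
  define Gr where "Gr = subdiff_graph f"
  define E where "E = {e. e \<ge> 0 \<and> Gr \<inter> eps_subdiff_sum f e w vs \<noteq> {}}"
  have F: "F_fun f w vs = (SUP p\<in>Gr. ereal (\<phi> p))" unfolding F_fun_def Gr_def \<phi>_def by simp
  have K: "K_fun f w vs = Inf (ereal ` E)" unfolding K_fun_def E_def Gr_def by simp
  have s1: "\<phi> p \<le> fw + c \<and> fw + c - \<phi> p \<in> E" if pG: "p \<in> Gr" for p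
  proof -
    obtain y ys where p: "p = (y, ys)" by (cases p)
    obtain fy where fy: "f y = ereal fy" and sub: "\<And>z. ereal (fy + blinfun_apply ys (z - y)) \<le> f z"
      using pG unfolding p Gr_def graph_char by blast
    define a where "a = fw - fy - blinfun_apply ys (w - y)"
    define b where "b = fy + c - blinfun_apply vs y"
    have ha: "a \<ge> 0" using sub[of w] fw unfolding a_def by simp
    have hb: "b \<ge> 0" using fconj_ge[of vs y f] fy c unfolding b_def by simp
    have A: "ys \<in> eps_subdiff f a w"
      unfolding eps_subdiff_char
    proof (intro exI[of _ fw] conjI allI)
      show "f w = ereal fw" by (rule fw)
      fix z
      have "fw + (blinfun_apply ys (z - w) - a) = fy + blinfun_apply ys (z - y)"
        unfolding a_def by (simp add: blinfun.diff_right)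
      then show "ereal (fw + (blinfun_apply ys (z - w) - a)) \<le> f z" using sub[of z] by simp
    qed
    have B: "y \<in> eps_subdiff_conj f b vs"
      unfolding eps_subdiff_conj_char
    proof (intro exI[of _ c] conjI allI)
      show "fconj f vs = ereal c" by (rule c)
      fix zs
      have "c + (blinfun_apply (zs - vs) y - b) = blinfun_apply zs y - fy"
        unfolding b_def by (simp add: blinfun.diff_left)
      then show "ereal (c + (blinfun_apply (zs - vs) y - b)) \<le> fconj f zs"
        using fconj_ge[of zs y f] fy by simp
    qed
    have ab: "a + b = fw + c - \<phi> p" unfolding a_def b_def \<phi>_def p by (simp add: blinfun.diff_right)
    have "p \<in> eps_subdiff_sum f (a + b) w vs"
      unfolding eps_subdiff_sum_def p using A B ha hb by auto
    then have "fw + c - \<phi> p \<in> E" unfolding E_def using ab ha hb pG by auto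
    moreover have "\<phi> p \<le> fw + c" using ab ha hb by linarith
    ultimately show ?thesis by blast
  qed
  have s2: "fw + c - \<phi> p \<le> e" if pG: "p \<in> Gr" and pS: "p \<in> eps_subdiff_sum f e w vs" for p e
  proof -
    obtain y ys where p: "p = (y, ys)" by (cases p)
    obtain fy where fy: "f y = ereal fy" and sub: "\<And>z. ereal (fy + blinfun_apply ys (z - y)) \<le> f z"
      using pG unfolding p Gr_def graph_char by blast
    obtain a b where ab: "a \<ge> 0" "b \<ge> 0" "a + b \<le> e" and A: "ys \<in> eps_subdiff f a w"
      and B: "y \<in> eps_subdiff_conj f b vs"
      using pS unfolding p eps_subdiff_sum_def by blast
    obtain fx where fx: "f w = ereal fx" and fxz: "\<And>z. ereal (fx + (blinfun_apply ys (z - w) - a)) \<le> f z"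
      using A unfolding eps_subdiff_char by blast
    have A1: "ereal (fw + (blinfun_apply ys (y - w) - a)) \<le> ereal fy"
      using fxz[of y] fx fw fy by simp
    obtain cx where cx: "fconj f vs = ereal cx"
      and cxz: "\<And>zs. ereal (cx + (blinfun_apply (zs - vs) y - b)) \<le> fconj f zs"
      using B unfolding eps_subdiff_conj_char by blast
    have B1: "ereal (c + (blinfun_apply (ys - vs) y - b)) \<le> fconj f ys"
      using cxz[of ys] cx c by simp
    have fc: "fconj f ys \<le> ereal (blinfun_apply ys y - fy)"
      unfolding fconj_def
    proof (rule SUP_least)
      fix x
      show "ereal (blinfun_apply ys x) - f x \<le> ereal (blinfun_apply ys y - fy)"
      proof (cases "f x")
        case (real r)
        then have "fy + blinfun_apply ys (x - y) \<le> r" using sub[of x] by simp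
        then show ?thesis using real by (simp add: blinfun.diff_right)
      next
        case PInf then show ?thesis by simp
      next
        case MInf then show ?thesis using sub[of x] by simp
      qed
    qed
    from A1 have "fw + blinfun_apply ys (y - w) - a \<le> fy" by simp
    moreover have "ereal (c + (blinfun_apply (ys - vs) y - b)) \<le> ereal (blinfun_apply ys y - fy)"
      using B1 fc by (rule order_trans)
    then have "c + (blinfun_apply (ys - vs) y - b) \<le> blinfun_apply ys y - fy"
      by (simp only: ereal_less_eq(3))
    ultimately show ?thesis using ab unfolding \<phi>_def p
      by (simp add: blinfun.diff_right blinfun.diff_left)
  qed
  have p0G: "(y0, ys0) \<in> Gr" using p0 unfolding Gr_def .
  have F_le: "(SUP p\<in>Gr. ereal (\<phi> p)) \<le> ereal (fw + c)"
    by (rule SUP_least) (use s1 in simp)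
  have F_ge: "ereal (\<phi> (y0, ys0)) \<le> (SUP p\<in>Gr. ereal (\<phi> p))"
    by (rule SUP_upper[OF p0G])
  obtain Fr where Fr: "(SUP p\<in>Gr. ereal (\<phi> p)) = ereal Fr"
    using F_le F_ge by (cases "(SUP p\<in>Gr. ereal (\<phi> p))") auto
  have K_le: "Inf (ereal ` E) \<le> ereal (fw + c - \<phi> p)" if "p \<in> Gr" for p
    using s1[OF that] by (intro Inf_lower) auto
  have K_ge: "0 \<le> Inf (ereal ` E)"
    by (rule Inf_greatest) (auto simp: E_def)
  obtain Kr where Kr: "Inf (ereal ` E) = ereal Kr"
    using K_le[OF p0G] K_ge by (cases "Inf (ereal ` E)") auto
  have "(SUP p\<in>Gr. ereal (\<phi> p)) \<le> ereal (fw + c - Kr)"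
  proof (rule SUP_least)
    fix p assume "p \<in> Gr"
    then have "Kr \<le> fw + c - \<phi> p" using K_le Kr by simp
    then show "ereal (\<phi> p) \<le> ereal (fw + c - Kr)" by simp
  qed
  then have h1: "Fr \<le> fw + c - Kr" using Fr by simp
  have "ereal (fw + c - Fr) \<le> Inf (ereal ` E)"
  proof (rule Inf_greatest)
    fix x assume "x \<in> ereal ` E"
    then obtain e where x: "x = ereal e" and eE: "e \<in> E" by blast
    then obtain p where pG: "p \<in> Gr" and pS: "p \<in> eps_subdiff_sum f e w vs" unfolding E_def by blast
    have "ereal (\<phi> p) \<le> ereal Fr" using SUP_upper[OF pG, of "\<lambda>p. ereal (\<phi> p)"] Fr by simp
    then show "ereal (fw + c - Fr) \<le> x" using s2[OF pG pS] x by simp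
  qed
  then have h2: "fw + c - Fr \<le> Kr" using Kr by simp
  have "Fr + Kr = fw + c" using h1 h2 by linarith
  then show ?thesis unfolding F K Fr Kr fw c by simp
qed

end
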